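(* Let $s\ge2$ and let $r>0$ satisfy $r\ge s+2$ and $\|u\|^2+\|w\|^2\le r$ for all $u\in\mathbb R^{s+1}$ with $u_1=1$, $\|(u_2,\dots,u_{s+1})\|_2\le1$ and all extreme points $w$ of $\{w\in\mathbb R^{2s}:w\ge0,B^Tw=d\}$. Define \[ Z:=\frac14\Big[\begin{pmatrix}2e_1\\ \mathbb 1_{2s}\end{pmatrix}\begin{pmatrix}2e_1\\ \mathbb 1_{2s}\end{pmatrix}^T+\sum_{i=1}^s\begin{pmatrix}\tfrac{2}{\sqrt s}e_{i+1}\\ f_{2i-1}-f_{2i}\end{pmatrix}\begin{pmatrix}\tfrac{2}{\sqrt s}e_{i+1}\\ f_{2i-1}-f_{2i}\end{pmatrix}^T\Big]\in\mathcal S^{3s+1}. \] Then $Z$ is an optimal solution of the problem \[ \max\ F\bullet Z_{21}\ \ \text{s.t.}\ \ \mathrm{diag}(EZE^T)=0,\ I\bullet Z\le r,\ J\bullet Z_{11}\ge0,\ Z_{11}e_1\in\widehat{\mathcal U}_2,\ Z_{22}\ge0,\ \text{each row of }Z_{21}\in\widehat{\mathcal U}_2,\ Z\succeq0,\ g_1g_1^T\bullet Z=1, \] and its objective value is $F\bullet Z_{21}=\tfrac12(\sqrt s+s)$.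
   Context: $k=s+1$, $m=2s$. $e_1,\dots,e_{s+1}$ standard basis of $\mathbb R^{s+1}$; $f_1,\dots,f_{2s}$ standard basis of $\mathbb R^{2s}$; $\epsilon_j$ standard basis of $\mathbb R^s$; $\mathbb 1_{2s}$ all-ones vector; $g_1=(e_1;0)\in\mathbb R^{3s+1}$. $d:=\epsilon_s$. $B\in\mathbb R^{2s\times s}$: rows $2i-1$ and $2i$ both equal $\epsilon_1^T$ for $i=1$ and both equal $-\epsilon_{i-1}^T+\epsilon_i^T$ for $i=2,\dots,s$. $F\in\mathbb R^{2s\times(s+1)}$: row $2i-1$ is $\tfrac12(e_1+e_{i+1})^T$, row $2i$ is $\tfrac12(e_1-e_{i+1})^T$. $E:=\begin{pmatrix}-de_1^T&B^T\end{pmatrix}$. $J:=\mathrm{Diag}(1,-1,\dots,-1)\in\mathcal S^{s+1}$. $\widehat{\mathcal U}_2:=\{u\in\mathbb R^{s+1}:\|(u_2,\dots,u_{s+1})\|_2\le u_1\}$. $Z$ is partitioned as $\begin{pmatrix}Z_{11}&Z_{21}^T\\Z_{21}&Z_{22}\end{pmatrix}$ with $Z_{11}\in\mathcal S^{s+1}$, $Z_{21}\in\mathbb R^{2s\times(s+1)}$, $Z_{22}\in\mathcal S^{2s}$. $A\bullet B:=\mathrm{trace}(A^TB)$; $\mathrm{diag}(\cdot)$ is the vector of diagonal entries; $Z_{22}\ge0$ is entrywise. *)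

theory Defs
  imports "HOL-Analysis.Analysis"
begin

text \<open>Conventions: vectors in R^n are functions nat => real, indexed 1..n;
matrices in R^(m x n) are functions nat => nat => real, indexed 1..m, 1..n.
Entries outside these ranges are irrelevant (never referenced).\<close>

definition ev :: "nat \<Rightarrow> nat \<Rightarrow> real" where
  "ev i k = (if k = i then 1 else 0)"

definition ones :: "nat \<Rightarrow> real" where "ones k = 1"

definition vstack :: "nat \<Rightarrow> (nat \<Rightarrow> real) \<Rightarrow> (nat \<Rightarrow> real) \<Rightarrow> nat \<Rightarrow> real" where
  "vstack p x y k = (if k \<le> p then x k else y (k - p))"

definition outer :: "(nat \<Rightarrow> real) \<Rightarrow> nat \<Rightarrow> nat \<Rightarrow> real" where
  "outer a i j = a i * a j"

definition frob :: "nat \<Rightarrow> nat \<Rightarrow> (nat \<Rightarrow> nat \<Rightarrow> real) \<Rightarrow> (nat \<Rightarrow> nat \<Rightarrow> real) \<Rightarrow> real" where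
  "frob m n X Y = (\<Sum>i=1..m. \<Sum>j=1..n. X i j * Y i j)"

definition symmetric_mat :: "nat \<Rightarrow> (nat \<Rightarrow> nat \<Rightarrow> real) \<Rightarrow> bool" where
  "symmetric_mat n Z \<longleftrightarrow> (\<forall>i\<in>{1..n}. \<forall>j\<in>{1..n}. Z i j = Z j i)"

definition psd :: "nat \<Rightarrow> (nat \<Rightarrow> nat \<Rightarrow> real) \<Rightarrow> bool" where
  "psd n Z \<longleftrightarrow> symmetric_mat n Z \<and>
     (\<forall>x::nat \<Rightarrow> real. (\<Sum>i=1..n. \<Sum>j=1..n. x i * Z i j * x j) \<ge> 0)"

definition Uhat2 :: "nat \<Rightarrow> (nat \<Rightarrow> real) set" where
  "Uhat2 s = {u. sqrt (\<Sum>i\<in>{2..s+1}. (u i)\<^sup>2) \<le> u 1}"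

definition extreme_pt :: "(nat \<Rightarrow> real) set \<Rightarrow> (nat \<Rightarrow> real) \<Rightarrow> bool" where
  "extreme_pt P w \<longleftrightarrow> w \<in> P \<and>
     \<not> (\<exists>u\<in>P. \<exists>v\<in>P. u \<noteq> v \<and> (\<exists>t. 0 < t \<and> t < 1 \<and> w = (\<lambda>k. t * u k + (1 - t) * v k)))"

definition dvec :: "nat \<Rightarrow> nat \<Rightarrow> real" where "dvec s = ev s"

text \<open>B in R^(2s x s): rows 2i-1, 2i equal eps_1^T for i=1, and -eps_(i-1)^T + eps_i^T for i=2..s.\<close>
definition Bmat :: "nat \<Rightarrow> nat \<Rightarrow> nat \<Rightarrow> real" where
  "Bmat s r c = (let i = (r + 1) div 2 in
      if i = 1 then ev 1 c else - ev (i - 1) c + ev i c)"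

text \<open>F in R^(2s x (s+1)): row 2i-1 is (e_1+e_(i+1))^T/2, row 2i is (e_1-e_(i+1))^T/2.\<close>
definition Fmat :: "nat \<Rightarrow> nat \<Rightarrow> nat \<Rightarrow> real" where
  "Fmat s r c = (let i = (r + 1) div 2 in
      if odd r then (ev 1 c + ev (i + 1) c) / 2 else (ev 1 c - ev (i + 1) c) / 2)"

text \<open>E = ( -d e_1^T   B^T ) in R^(s x (3s+1)).\<close>
definition Emat :: "nat \<Rightarrow> nat \<Rightarrow> nat \<Rightarrow> real" where
  "Emat s i k = (if k \<le> s + 1 then - dvec s i * ev 1 k else Bmat s (k - (s + 1)) i)"

definition Z11 :: "nat \<Rightarrow> (nat \<Rightarrow> nat \<Rightarrow> real) \<Rightarrow> nat \<Rightarrow> nat \<Rightarrow> real" where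
  "Z11 s Z i j = Z i j"
definition Z21 :: "nat \<Rightarrow> (nat \<Rightarrow> nat \<Rightarrow> real) \<Rightarrow> nat \<Rightarrow> nat \<Rightarrow> real" where
  "Z21 s Z i j = Z (s + 1 + i) j"
definition Z22 :: "nat \<Rightarrow> (nat \<Rightarrow> nat \<Rightarrow> real) \<Rightarrow> nat \<Rightarrow> nat \<Rightarrow> real" where
  "Z22 s Z i j = Z (s + 1 + i) (s + 1 + j)"

definition Jmat :: "nat \<Rightarrow> nat \<Rightarrow> real" where
  "Jmat i j = (if i = j then (if i = 1 then 1 else -1) else 0)"

definition Imat :: "nat \<Rightarrow> nat \<Rightarrow> real" where
  "Imat i j = (if i = j then 1 else 0)"

definition g1 :: "nat \<Rightarrow> nat \<Rightarrow> real" where "g1 s = vstack (s + 1) (ev 1) (\<lambda>_. 0)"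

definition EZEt_diag :: "nat \<Rightarrow> (nat \<Rightarrow> nat \<Rightarrow> real) \<Rightarrow> nat \<Rightarrow> real" where
  "EZEt_diag s Z i = (\<Sum>k\<in>{1..3 * s + 1}. \<Sum>l\<in>{1..3 * s + 1}. Emat s i k * Z k l * Emat s i l)"

definition objective :: "nat \<Rightarrow> (nat \<Rightarrow> nat \<Rightarrow> real) \<Rightarrow> real" where
  "objective s Z = frob (2 * s) (s+1) (Fmat s) (Z21 s Z)"

definition feasible :: "nat \<Rightarrow> real \<Rightarrow> (nat \<Rightarrow> nat \<Rightarrow> real) \<Rightarrow> bool" where
  "feasible s r Z \<longleftrightarrow>
     symmetric_mat (3 * s + 1) Z \<and>
     (\<forall>i\<in>{1..s}. EZEt_diag s Z i = 0) \<and>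
     frob (3 * s + 1) (3 * s + 1) Imat Z \<le> r \<and>
     frob (s+1) (s+1) Jmat (Z11 s Z) \<ge> 0 \<and>
     (\<lambda>i. Z11 s Z i 1) \<in> Uhat2 s \<and>
     (\<forall>i\<in>{1..2 * s}. \<forall>j\<in>{1..2 * s}. Z22 s Z i j \<ge> 0) \<and>
     (\<forall>i\<in>{1..2 * s}. (\<lambda>j. Z21 s Z i j) \<in> Uhat2 s) \<and>
     psd (3 * s + 1) Z \<and>
     frob (3 * s + 1) (3 * s + 1) (outer (g1 s)) Z = 1"

definition optimal :: "nat \<Rightarrow> real \<Rightarrow> (nat \<Rightarrow> nat \<Rightarrow> real) \<Rightarrow> bool" where
  "optimal s r Z \<longleftrightarrow> feasible s r Z \<and> (\<forall>Z'. feasible s r Z' \<longrightarrow> objective s Z' \<le> objective s Z)"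

definition Wpoly :: "nat \<Rightarrow> (nat \<Rightarrow> real) set" where
  "Wpoly s = {w. (\<forall>k. k \<notin> {1..2 * s} \<longrightarrow> w k = 0) \<and> (\<forall>j\<in>{1..2 * s}. w j \<ge> 0) \<and>
                 (\<forall>i\<in>{1..s}. (\<Sum>j\<in>{1..2 * s}. Bmat s j i * w j) = dvec s i)}"

definition avec :: "nat \<Rightarrow> nat \<Rightarrow> real" where
  "avec s = vstack (s + 1) (\<lambda>k. 2 * ev 1 k) ones"
definition bvec :: "nat \<Rightarrow> nat \<Rightarrow> nat \<Rightarrow> real" where
  "bvec s i = vstack (s + 1) (\<lambda>k. 2 / sqrt (real s) * ev (i + 1) k) (\<lambda>k. ev (2 * i - 1) k - ev (2 * i) k)"
definition Zopt :: "nat \<Rightarrow> nat \<Rightarrow> nat \<Rightarrow> real" where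
  "Zopt s k l = (1/4) * (outer (avec s) k l + (\<Sum>i=1..s. outer (bvec s i) k l))"

end

theory Submission
  imports Defs
begin
lemma sum_split_range:
  "(\<Sum>k\<in>{1..p+q}. f k) = (\<Sum>k\<in>{1..p}. f k) + (\<Sum>r\<in>{1..q}. f (p+r))" for p q :: nat
  by (induction q) (auto simp: ac_simps)

lemma sum_pairs:
  "(\<Sum>r\<in>{1..2 * s}. f r) = (\<Sum>i\<in>{1..s}. f (2 * i - 1) + f (2 * i))" for s :: nat
proof (induction s)
  case 0 then show ?case by simp
next
  case (Suc s)
  have "{1..2 * Suc s} = insert (2 * s + 2) (insert (2 * s + 1) {1..2 * s})" by auto
  then show ?case using Suc by (simp add: ac_simps)
qed

lemma sum_ev_left: "finite A \<Longrightarrow> p \<in> A \<Longrightarrow> (\<Sum>k\<in>A. ev p k * f k) = f p"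
proof -
  assume "finite A" "p \<in> A"
  have "(\<Sum>k\<in>A. ev p k * f k) = (\<Sum>k\<in>A. if k = p then f k else 0)"
    by (rule sum.cong) (auto simp: ev_def)
  then show ?thesis using \<open>finite A\<close> \<open>p \<in> A\<close> by simp
qed

lemma sum_ev_right: "finite A \<Longrightarrow> p \<in> A \<Longrightarrow> (\<Sum>k\<in>A. f k * ev p k) = f p"
  using sum_ev_left[of A p f] by (simp add: mult.commute)


definition Qf :: "nat \<Rightarrow> (nat \<Rightarrow> nat \<Rightarrow> real) \<Rightarrow> (nat \<Rightarrow> real) \<Rightarrow> real" where
  "Qf n Z x = (\<Sum>i=1..n. \<Sum>j=1..n. x i * Z i j * x j)"

lemma Qf_nonneg: "psd n Z \<Longrightarrow> Qf n Z x \<ge> 0"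
  unfolding psd_def Qf_def by blast

lemma Qf_expand:
  assumes sym: "symmetric_mat n Z" and k: "k \<in> {1..n}"
  shows "Qf n Z (\<lambda>i. x i + t * ev k i) = Qf n Z x + 2 * t * (\<Sum>j=1..n. Z k j * x j) + t^2 * Z k k"
proof -
  have e: "(x i + t * ev k i) * Z i j * (x j + t * ev k j) =
     x i * Z i j * x j + t * (ev k i * (Z i j * x j)) + t * (ev k j * (x i * Z i j)) + t^2 * (ev k i * (ev k j * Z i j))" for i j
    by (simp add: algebra_simps power2_eq_square)
  have s1: "(\<Sum>i=1..n. \<Sum>j=1..n. ev k i * (Z i j * x j)) = (\<Sum>j=1..n. Z k j * x j)"
    using k by (simp add: sum_distrib_left[symmetric] sum_ev_left)
  have s2: "(\<Sum>i=1..n. \<Sum>j=1..n. ev k j * (x i * Z i j)) = (\<Sum>j=1..n. Z k j * x j)"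
  proof -
    have "(\<Sum>i=1..n. \<Sum>j=1..n. ev k j * (x i * Z i j)) = (\<Sum>i=1..n. x i * Z i k)"
      using k by (simp add: sum_ev_left)
    also have "\<dots> = (\<Sum>i=1..n. Z k i * x i)"
      using sym k unfolding symmetric_mat_def by (intro sum.cong) (auto simp: mult.commute)
    finally show ?thesis .
  qed
  have s3: "(\<Sum>i=1..n. \<Sum>j=1..n. ev k i * (ev k j * Z i j)) = Z k k"
    using k by (simp add: sum_distrib_left[symmetric] sum_ev_left)
  have s1': "(\<Sum>i=1..n. ev k i * (\<Sum>j=1..n. Z i j * x j)) = (\<Sum>j=1..n. Z k j * x j)"
    using k by (simp add: sum_ev_left)
  have s3': "(\<Sum>i=1..n. ev k i * (\<Sum>j=1..n. ev k j * Z i j)) = Z k k"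
    using k by (simp add: sum_ev_left)
  show ?thesis
    unfolding Qf_def e sum.distrib sum_distrib_left[symmetric] s1 s2 s3 s1' s3'
    by simp
qed

lemma quad_zero:
  fixes b c :: real
  assumes "c \<ge> 0" and "\<And>t. 2 * t * b + t^2 * c \<ge> 0"
  shows "b = 0"
proof (rule ccontr)
  assume "b \<noteq> 0"
  define t where "t = - b / (c + 1)"
  have "2 * t * b + t^2 * c = b^2 * (- c - 2) / (c+1)^2"
    using assms(1) unfolding t_def by (simp add: field_simps power2_eq_square add_nonneg_eq_0_iff)
  also have "\<dots> < 0" using \<open>b \<noteq> 0\<close> assms(1)
    by (intro divide_neg_pos mult_pos_neg) auto
  finally show False using assms(2)[of t] by simp
qed

lemma psd_kernel:
  assumes "psd n Z" "Qf n Z x = 0" "k \<in> {1..n}"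
  shows "(\<Sum>j=1..n. Z k j * x j) = 0"
proof (rule quad_zero)
  have sym: "symmetric_mat n Z" using assms(1) unfolding psd_def by blast
  have "Qf n Z (\<lambda>i. 0 + 1 * ev k i) = Z k k"
    using Qf_expand[OF sym assms(3), of "\<lambda>_. 0" 1] by (simp add: Qf_def)
  then show "Z k k \<ge> 0" using Qf_nonneg[OF assms(1)] by metis
  fix t
  show "2 * t * (\<Sum>j=1..n. Z k j * x j) + t^2 * Z k k \<ge> 0"
    using Qf_expand[OF sym assms(3), of x t] Qf_nonneg[OF assms(1)] assms(2) by smt
qed


definition gB :: "nat \<Rightarrow> nat \<Rightarrow> real" where
  "gB i c = (if i = 1 then ev 1 c else - ev (i - 1) c + ev i c)"

lemma Bmat_odd: "i \<ge> 1 \<Longrightarrow> Bmat s (2 * i - 1) c = gB i c"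
  unfolding Bmat_def gB_def Let_def by (cases i) auto

lemma Bmat_even: "Bmat s (2 * i) c = gB i c"
  unfolding Bmat_def gB_def Let_def by simp

lemma gB_tele:
  assumes "c \<ge> 1"
  shows "(\<Sum>i=1..n. W i * gB i c) = (if c \<le> n then W c else 0) - (if c + 1 \<le> n then W (c+1) else 0)"
  using assms
proof (induction n)
  case 0 then show ?case by simp
next
  case (Suc n)
  then show ?case by (auto simp: gB_def ev_def le_Suc_eq)
qed

lemma Emat_row_sum:
  assumes "c \<ge> 1"
  shows "(\<Sum>l=1..3 * s + 1. h l * Emat s c l) =
    - dvec s c * h 1 + (if c \<le> s then h (s + 2 * c) + h (s + 2 * c + 1) else 0)
      - (if c + 1 \<le> s then h (s + 2 * (c+1)) + h (s + 2 * (c+1) + 1) else 0)"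
proof -
  have "(\<Sum>l=1..3 * s + 1. h l * Emat s c l) = (\<Sum>l=1..(s+1) + 2 * s. h l * Emat s c l)"
    by (simp add: algebra_simps)
  also have "\<dots> = (\<Sum>l=1..s+1. h l * Emat s c l) + (\<Sum>r=1..2 * s. h (s + 1 + r) * Emat s c (s + 1 + r))"
    by (rule sum_split_range)
  also have "(\<Sum>l=1..s+1. h l * Emat s c l) = (\<Sum>l=1..s+1. (- dvec s c * h l) * ev 1 l)"
    by (intro sum.cong) (auto simp: Emat_def)
  also have "\<dots> = - dvec s c * h 1" by (rule sum_ev_right) auto
  also have "(\<Sum>r=1..2 * s. h (s + 1 + r) * Emat s c (s + 1 + r)) = (\<Sum>r=1..2 * s. h (s + 1 + r) * Bmat s r c)"
    by (intro sum.cong) (auto simp: Emat_def)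
  also have "\<dots> = (\<Sum>i=1..s. h (s + 1 + (2 * i - 1)) * Bmat s (2 * i - 1) c + h (s + 1 + 2 * i) * Bmat s (2 * i) c)"
    by (rule sum_pairs)
  also have "\<dots> = (\<Sum>i=1..s. (h (s + 2 * i) + h (s + 2 * i + 1)) * gB i c)"
  proof (intro sum.cong refl)
    fix i assume "i \<in> {1..s}"
    then have "s + 1 + (2 * i - 1) = s + 2 * i" "s + 1 + 2 * i = s + 2 * i + 1" by auto
    then show "h (s + 1 + (2 * i - 1)) * Bmat s (2 * i - 1) c + h (s + 1 + 2 * i) * Bmat s (2 * i) c
       = (h (s + 2 * i) + h (s + 2 * i + 1)) * gB i c"
      using \<open>i \<in> {1..s}\<close> Bmat_odd[of i s c] by (simp add: Bmat_even distrib_right)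
  qed
  also have "\<dots> = (if c \<le> s then h (s + 2 * c) + h (s + 2 * c + 1) else 0)
      - (if c + 1 \<le> s then h (s + 2 * (c+1)) + h (s + 2 * (c+1) + 1) else 0)"
    using gB_tele[OF assms, of "\<lambda>i. h (s + 2 * i) + h (s + 2 * i + 1)" s] by simp
  finally show ?thesis by simp
qed


lemma sum3_ev:
  assumes "finite A" "p \<in> A" "q \<in> A" "m \<in> A"
  shows "(\<Sum>j\<in>A. f j * (ev p j - ev q j - t * ev m j)) = f p - f q - t * f m"
proof -
  have "(\<Sum>j\<in>A. f j * (ev p j - ev q j - t * ev m j)) =
     (\<Sum>j\<in>A. f j * ev p j) - (\<Sum>j\<in>A. f j * ev q j) - t * (\<Sum>j\<in>A. f j * ev m j)"
    by (simp add: right_diff_distrib sum_subtractf sum_distrib_left mult.left_commute)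
  then show ?thesis using assms by (simp add: sum_ev_right)
qed

lemma Qf3:
  assumes sym: "symmetric_mat n Z" and "p \<in> {1..n}" "q \<in> {1..n}" "m \<in> {1..n}"
  shows "Qf n Z (\<lambda>k. ev p k - ev q k - t * ev m k) =
     Z p p + Z q q - 2 * Z p q - 2 * t * (Z p m - Z q m) + t^2 * Z m m"
proof -
  have "Qf n Z (\<lambda>k. ev p k - ev q k - t * ev m k) =
     (\<Sum>i=1..n. (Z i p - Z i q - t * Z i m) * (ev p i - ev q i - t * ev m i))"
    unfolding Qf_def
  proof (intro sum.cong refl)
    fix i
    have "(\<Sum>j=1..n. (ev p i - ev q i - t * ev m i) * Z i j * (ev p j - ev q j - t * ev m j))
       = (ev p i - ev q i - t * ev m i) * (\<Sum>j=1..n. Z i j * (ev p j - ev q j - t * ev m j))"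
      by (simp add: sum_distrib_left mult.assoc)
    also have "\<dots> = (ev p i - ev q i - t * ev m i) * (Z i p - Z i q - t * Z i m)"
      using assms by (simp add: sum3_ev)
    finally show "(\<Sum>j=1..n. (ev p i - ev q i - t * ev m i) * Z i j * (ev p j - ev q j - t * ev m j))
       = (Z i p - Z i q - t * Z i m) * (ev p i - ev q i - t * ev m i)" by simp
  qed
  also have "\<dots> = (Z p p - Z p q - t * Z p m) - (Z q p - Z q q - t * Z q m) - t * (Z m p - Z m q - t * Z m m)"
    using assms by (simp add: sum3_ev)
  also have "\<dots> = Z p p + Z q q - 2 * Z p q - 2 * t * (Z p m - Z q m) + t^2 * Z m m"
    using sym assms unfolding symmetric_mat_def by (simp add: algebra_simps power2_eq_square)
  finally show ?thesis .
qed


lemma g1_ev: "g1 s = ev 1"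
  by (rule ext) (auto simp: g1_def vstack_def ev_def)

lemma upper_bound:
  assumes s1: "s \<ge> 1" and feas: "feasible s r Z"
  shows "objective s Z \<le> (sqrt (real s) + real s) / 2"
proof -
  define n where "n = 3 * s + 1"
  have psdZ: "psd n Z" and sym: "symmetric_mat n Z"
    using feas unfolding feasible_def n_def psd_def by auto
  have symZ: "Z i j = Z j i" if "i \<in> {1..n}" "j \<in> {1..n}" for i j
    using sym that unfolding symmetric_mat_def by blast
  define W where "W k i = Z k (s + 2 * i) + Z k (s + 2 * i + 1)" for k i
  have row0: "- dvec s c * Z k 1 + W k c - (if c + 1 \<le> s then W k (c+1) else 0) = 0"
    if c: "c \<in> {1..s}" and k: "k \<in> {1..n}" for c k
  proof -
    have "Qf n Z (\<lambda>l. Emat s c l) = 0"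
      using feas c unfolding feasible_def EZEt_diag_def Qf_def n_def by auto
    from psd_kernel[OF psdZ this k] have "(\<Sum>l=1..3 * s + 1. Z k l * Emat s c l) = 0"
      by (simp add: n_def)
    then show ?thesis using Emat_row_sum[of c "Z k" s] c unfolding W_def by auto
  qed
  have Wk: "W k i = Z k 1" if k: "k \<in> {1..n}" and i: "i \<in> {1..s}" for k i
  proof -
    have "\<forall>j. j < s \<longrightarrow> W k (s - j) = Z k 1"
    proof
      fix j show "j < s \<longrightarrow> W k (s - j) = Z k 1"
      proof (induction j)
        case 0
        show ?case using row0[of s k] k s1 by (simp add: dvec_def ev_def)
      next
        case (Suc j)
        show ?case
        proof
          assume "Suc j < s"
          then have c: "s - Suc j \<in> {1..s}" and "s - Suc j + 1 = s - j" and "s - Suc j \<noteq> s" by auto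
          then have "W k (s - Suc j) = W k (s - j)"
            using row0[OF c k] by (simp add: dvec_def ev_def)
          then show "W k (s - Suc j) = Z k 1" using Suc \<open>Suc j < s\<close> by simp
        qed
      qed
    qed
    moreover have "s - i < s" using i by auto
    ultimately have "W k (s - (s - i)) = Z k 1" by blast
    moreover have "s - (s - i) = i" using i by auto
    ultimately show ?thesis by simp
  qed
  have Z11: "Z 1 1 = 1"
  proof -
    have n1: "1 \<in> {1..n}" by (simp add: n_def)
    have "frob n n (outer (g1 s)) Z = (\<Sum>i=1..n. ev 1 i * (\<Sum>j=1..n. ev 1 j * Z i j))"
      unfolding frob_def outer_def g1_ev by (simp add: mult.assoc sum_distrib_left)
    also have "\<dots> = Z 1 1" using n1 by (simp add: sum_ev_left)
    finally have "frob n n (outer (g1 s)) Z = Z 1 1" .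
    then show ?thesis using feas unfolding feasible_def n_def by simp
  qed
  have Jsum: "(\<Sum>m=1..s. Z (m+1) (m+1)) \<le> 1"
  proof -
    have "frob (s+1) (s+1) Jmat (Z11 s Z) = (\<Sum>i=1..s+1. (if i = 1 then 1 else -1) * Z i i)"
      unfolding frob_def Z11_def
    proof (intro sum.cong refl)
      fix i assume "i \<in> {1..s+1}"
      have "(\<Sum>j=1..s+1. Jmat i j * Z i j) = (\<Sum>j=1..s+1. ((if i = 1 then 1 else -1) * Z i j) * ev i j)"
        by (intro sum.cong) (auto simp: Jmat_def ev_def)
      also have "\<dots> = (if i = 1 then 1 else -1) * Z i i"
        using \<open>i \<in> {1..s+1}\<close> by (intro sum_ev_right) auto
      finally show "(\<Sum>j=1..s+1. Jmat i j * Z i j) = (if i = 1 then 1 else -1) * Z i i" .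
    qed
    also have "\<dots> = (\<Sum>i=1..1+s. (if i = 1 then 1 else -1) * Z i i)" by (simp add: add.commute)
    also have "\<dots> = Z 1 1 - (\<Sum>m=1..s. Z (m+1) (m+1))"
      unfolding sum_split_range by (simp add: sum_negf)
    finally show ?thesis using feas Z11 unfolding feasible_def by simp
  qed
  define t where "t = sqrt (real s)"
  have tt: "t^2 = real s" "t > 0" using s1 unfolding t_def by auto
  define D where "D i = Z (s + 2 * i) (i + 1) - Z (s + 2 * i + 1) (i + 1)" for i
  have Di: "2 * t * D i \<le> 1 + t^2 * Z (i+1) (i+1)" if i: "i \<in> {1..s}" for i
  proof -
    define p where "p = s + 2 * i"
    define q where "q = s + 2 * i + 1"
    define m where "m = i + 1"
    have pqm: "p \<in> {1..n}" "q \<in> {1..n}" "m \<in> {1..n}" "1 \<in> {1..n}"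
      using i unfolding p_def q_def m_def n_def by auto
    have "Qf n Z (\<lambda>k. ev p k - ev q k - t * ev m k) \<ge> 0" by (rule Qf_nonneg[OF psdZ])
    then have A: "Z p p + Z q q - 2 * Z p q - 2 * t * (Z p m - Z q m) + t^2 * Z m m \<ge> 0"
      using Qf3[OF sym pqm(1-3)] by simp
    have "Z p p + Z p q = Z p 1" using Wk[OF pqm(1) i] unfolding W_def p_def q_def by simp
    moreover have "Z q p + Z q q = Z q 1" using Wk[OF pqm(2) i] unfolding W_def p_def q_def by simp
    moreover have "Z 1 p + Z 1 q = 1" using Wk[OF pqm(4) i] Z11 unfolding W_def p_def q_def by simp
    moreover have "Z q p = Z p q" "Z p 1 = Z 1 p" "Z q 1 = Z 1 q" using symZ pqm by auto
    moreover have "Z p q \<ge> 0"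
    proof -
      have "2 * i - 1 \<in> {1..2 * s}" "2 * i \<in> {1..2 * s}" using i by auto
      then have "Z22 s Z (2 * i - 1) (2 * i) \<ge> 0" using feas unfolding feasible_def by blast
      moreover have "s + 1 + (2 * i - 1) = p" "s + 1 + 2 * i = q" using i unfolding p_def q_def by auto
      ultimately show ?thesis unfolding Z22_def by simp
    qed
    ultimately have "Z p p + Z q q - 2 * Z p q \<le> 1" by linarith
    with A show ?thesis unfolding D_def p_def q_def m_def by linarith
  qed
  have sumD: "(\<Sum>i=1..s. D i) \<le> t"
  proof -
    have "2 * t * (\<Sum>i=1..s. D i) = (\<Sum>i=1..s. 2 * t * D i)" by (simp add: sum_distrib_left)
    also have "\<dots> \<le> (\<Sum>i=1..s. 1 + t^2 * Z (i+1) (i+1))" by (rule sum_mono) (rule Di)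
    also have "\<dots> = real s + t^2 * (\<Sum>i=1..s. Z (i+1) (i+1))" by (simp add: sum.distrib sum_distrib_left)
    also have "\<dots> \<le> real s + t^2 * 1" using Jsum by (intro add_left_mono mult_left_mono) auto
    also have "\<dots> = 2 * t * t" using tt by (simp add: power2_eq_square)
    finally show ?thesis using tt(2) by simp
  qed
  have obj: "objective s Z = real s / 2 + (\<Sum>i=1..s. D i) / 2"
  proof -
    have "objective s Z = (\<Sum>r=1..2 * s. \<Sum>c=1..s+1. Fmat s r c * Z (s + 1 + r) c)"
      unfolding objective_def frob_def Z21_def by simp
    also have "\<dots> = (\<Sum>i=1..s. (\<Sum>c=1..s+1. Fmat s (2 * i - 1) c * Z (s + 1 + (2 * i - 1)) c)
        + (\<Sum>c=1..s+1. Fmat s (2 * i) c * Z (s + 1 + 2 * i) c))"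
      by (rule sum_pairs)
    also have "\<dots> = (\<Sum>i=1..s. 1/2 + D i / 2)"
    proof (intro sum.cong refl)
      fix i assume i: "i \<in> {1..s}"
      have e1: "s + 1 + (2 * i - 1) = s + 2 * i" "s + 1 + 2 * i = s + 2 * i + 1" using i by auto
      have F1: "Fmat s (2 * i - 1) c = (ev 1 c + ev (i+1) c) / 2" for c
      proof -
        have "odd (2 * i - 1)" "(2 * i - 1 + 1) div 2 = i" using i by auto
        then show ?thesis unfolding Fmat_def Let_def by simp
      qed
      have F2: "Fmat s (2 * i) c = (ev 1 c - ev (i+1) c) / 2" for c
        unfolding Fmat_def Let_def by simp
      have r1: "(\<Sum>c=1..s+1. Fmat s (2 * i - 1) c * Z (s + 2 * i) c) = (Z (s + 2 * i) 1 + Z (s + 2 * i) (i+1)) / 2"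
        unfolding F1 using i
        by (simp add: add_divide_distrib distrib_right sum.distrib sum_divide_distrib[symmetric] sum_ev_left del: sum.cl_ivl_Suc)
      have r2: "(\<Sum>c=1..s+1. Fmat s (2 * i) c * Z (s + 2 * i + 1) c) = (Z (s + 2 * i + 1) 1 - Z (s + 2 * i + 1) (i+1)) / 2"
        unfolding F2 using i
        by (simp add: diff_divide_distrib left_diff_distrib sum_subtractf sum_divide_distrib[symmetric] sum_ev_left del: sum.cl_ivl_Suc)
      have "1 \<in> {1..n}" "s + 2 * i \<in> {1..n}" "s + 2 * i + 1 \<in> {1..n}" using i by (auto simp: n_def)
      then have "Z (s + 2 * i) 1 + Z (s + 2 * i + 1) 1 = 1"
        using Wk[of 1 i] i Z11 symZ unfolding W_def by metis
      then show "(\<Sum>c=1..s+1. Fmat s (2 * i - 1) c * Z (s + 1 + (2 * i - 1)) c)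
        + (\<Sum>c=1..s+1. Fmat s (2 * i) c * Z (s + 1 + 2 * i) c) = 1/2 + D i / 2"
        unfolding e1 r1 r2 D_def by (simp add: field_simps)
    qed
    also have "\<dots> = real s / 2 + (\<Sum>i=1..s. D i) / 2"
      by (simp add: sum.distrib sum_divide_distrib)
    finally show ?thesis .
  qed
  show ?thesis using obj sumD unfolding t_def by simp
qed


definition sg :: "nat \<Rightarrow> real" where "sg r = (if odd r then 1 else -1)"

lemma pm_ev: "r \<ge> 1 \<Longrightarrow> ev (2 * m - 1) r - ev (2 * m) r = (if m = (r + 1) div 2 then sg r else 0)"
  unfolding ev_def sg_def by (auto; presburger)

lemma avec_lo: "k \<le> s + 1 \<Longrightarrow> avec s k = 2 * ev 1 k"
  by (simp add: avec_def vstack_def)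
lemma avec_hi: "s + 1 < k \<Longrightarrow> avec s k = 1"
  by (simp add: avec_def vstack_def ones_def)
lemma bvec_lo: "k \<le> s + 1 \<Longrightarrow> bvec s i k = 2 / sqrt (real s) * ev (i + 1) k"
  by (simp add: bvec_def vstack_def)
lemma bvec_hi: "s + 1 < k \<Longrightarrow> bvec s i k = ev (2 * i - 1) (k - (s + 1)) - ev (2 * i) (k - (s + 1))"
  by (simp add: bvec_def vstack_def)

lemma gram_quad:
  fixes a :: "nat \<Rightarrow> real" and b :: "nat \<Rightarrow> nat \<Rightarrow> real"
  shows "(\<Sum>k\<in>A. \<Sum>l\<in>A. x k * ((1/4) * (a k * a l + (\<Sum>i\<in>I. b i k * b i l))) * x l)
    = (1/4) * ((\<Sum>k\<in>A. x k * a k)^2 + (\<Sum>i\<in>I. (\<Sum>k\<in>A. x k * b i k)^2))"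
proof -
  have e: "x k * ((1/4) * (a k * a l + (\<Sum>i\<in>I. b i k * b i l))) * x l
     = (1/4) * ((x k * a k) * (x l * a l)) + (1/4) * (\<Sum>i\<in>I. (x k * b i k) * (x l * b i l))" for k l
    by (simp add: algebra_simps sum_distrib_left sum_distrib_right)
  have 1: "(\<Sum>k\<in>A. \<Sum>l\<in>A. (x k * a k) * (x l * a l)) = (\<Sum>k\<in>A. x k * a k)^2"
    by (simp only: power2_eq_square sum_product)
  have "(\<Sum>k\<in>A. \<Sum>l\<in>A. \<Sum>i\<in>I. (x k * b i k) * (x l * b i l))
      = (\<Sum>k\<in>A. \<Sum>i\<in>I. \<Sum>l\<in>A. (x k * b i k) * (x l * b i l))"
    by (rule sum.cong[OF refl], rule sum.swap)
  also have "\<dots> = (\<Sum>i\<in>I. \<Sum>k\<in>A. \<Sum>l\<in>A. (x k * b i k) * (x l * b i l))"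
    by (rule sum.swap)
  also have "\<dots> = (\<Sum>i\<in>I. (\<Sum>k\<in>A. x k * b i k)^2)"
    by (simp only: power2_eq_square sum_product)
  finally have 2: "(\<Sum>k\<in>A. \<Sum>l\<in>A. \<Sum>i\<in>I. (x k * b i k) * (x l * b i l))
      = (\<Sum>i\<in>I. (\<Sum>k\<in>A. x k * b i k)^2)" .
  have "(\<Sum>k\<in>A. \<Sum>l\<in>A. x k * ((1/4) * (a k * a l + (\<Sum>i\<in>I. b i k * b i l))) * x l)
    = (1/4) * (\<Sum>k\<in>A. \<Sum>l\<in>A. (x k * a k) * (x l * a l))
      + (1/4) * (\<Sum>k\<in>A. \<Sum>l\<in>A. \<Sum>i\<in>I. (x k * b i k) * (x l * b i l))"
    by (simp only: e sum.distrib sum_distrib_left)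
  then show ?thesis unfolding 1 2 by simp
qed

lemma Zopt_gram: "Zopt s k l = (1/4) * (avec s k * avec s l + (\<Sum>i\<in>{1..s}. bvec s i k * bvec s i l))"
  by (simp add: Zopt_def outer_def)


lemma bvec_pair: assumes "c \<ge> 1" shows "bvec s m (s + 2 * c) + bvec s m (s + 2 * c + 1) = 0"
proof -
  have a: "bvec s m (s + 2 * c) = ev (2 * m - 1) (2 * c - 1) - ev (2 * m) (2 * c - 1)"
    using assms bvec_hi[of s "s + 2 * c" m] by simp
  have b: "bvec s m (s + 2 * c + 1) = ev (2 * m - 1) (2 * c) - ev (2 * m) (2 * c)"
    using assms bvec_hi[of s "s + 2 * c + 1" m] by simp
  have c1: "(2 * c - 1 + 1) div 2 = c" "(2 * c + 1) div 2 = c" "odd (2 * c - 1)" using assms by auto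
  show ?thesis unfolding a b using pm_ev[of "2 * c - 1" m] pm_ev[of "2 * c" m] assms c1
    by (auto simp: sg_def)
qed

lemma avec_pair: assumes "c \<ge> 1" shows "avec s (s + 2 * c) + avec s (s + 2 * c + 1) = 2"
  using assms by (simp add: avec_hi)

lemma E_avec: assumes "c \<in> {1..s}" shows "(\<Sum>k=1..3 * s + 1. Emat s c k * avec s k) = 0"
proof -
  have "(\<Sum>k=1..3 * s + 1. Emat s c k * avec s k) = (\<Sum>k=1..3 * s + 1. avec s k * Emat s c k)"
    by (simp add: mult.commute)
  also have "\<dots> = - dvec s c * avec s 1 + (if c \<le> s then avec s (s + 2 * c) + avec s (s + 2 * c + 1) else 0)
      - (if c + 1 \<le> s then avec s (s + 2 * (c+1)) + avec s (s + 2 * (c+1) + 1) else 0)"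
    using assms by (intro Emat_row_sum) auto
  also have "\<dots> = 0"
  proof -
    have "avec s 1 = 2" by (simp add: avec_lo ev_def)
    moreover have "avec s (s + 2 * c) + avec s (s + 2 * c + 1) = 2" using assms avec_pair by auto
    moreover have "avec s (s + 2 * (c+1)) + avec s (s + 2 * (c+1) + 1) = 2" using avec_pair[of "c+1"] by simp
    ultimately show ?thesis using assms by (cases "c = s") (auto simp: dvec_def ev_def)
  qed
  finally show ?thesis .
qed

lemma E_bvec: assumes "c \<in> {1..s}" "m \<in> {1..s}" shows "(\<Sum>k=1..3 * s + 1. Emat s c k * bvec s m k) = 0"
proof -
  have "(\<Sum>k=1..3 * s + 1. Emat s c k * bvec s m k) = (\<Sum>k=1..3 * s + 1. bvec s m k * Emat s c k)"
    by (simp add: mult.commute)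
  also have "\<dots> = - dvec s c * bvec s m 1 + (if c \<le> s then bvec s m (s + 2 * c) + bvec s m (s + 2 * c + 1) else 0)
      - (if c + 1 \<le> s then bvec s m (s + 2 * (c+1)) + bvec s m (s + 2 * (c+1) + 1) else 0)"
    using assms by (intro Emat_row_sum) auto
  also have "\<dots> = 0"
  proof -
    have "bvec s m 1 = 0" using assms by (simp add: bvec_lo ev_def)
    moreover have "bvec s m (s + 2 * c) + bvec s m (s + 2 * c + 1) = 0" using assms bvec_pair by auto
    moreover have "bvec s m (s + 2 * (c+1)) + bvec s m (s + 2 * (c+1) + 1) = 0" using bvec_pair[of "c+1"] by simp
    ultimately show ?thesis by simp
  qed
  finally show ?thesis .
qed


lemma bvec_hi_sg: "r \<ge> 1 \<Longrightarrow> bvec s i (s + 1 + r) = (if i = (r + 1) div 2 then sg r else 0)"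
proof -
  assume r: "r \<ge> 1"
  have "bvec s i (s + 1 + r) = ev (2 * i - 1) r - ev (2 * i) r" using r bvec_hi[of s "s + 1 + r" i] by simp
  also have "\<dots> = (if i = (r + 1) div 2 then sg r else 0)" by (rule pm_ev[OF r])
  finally show ?thesis .
qed

lemma Zopt_lo:
  assumes "s \<ge> 1" "k \<le> s + 1" "l \<le> s + 1"
  shows "Zopt s k l = ev 1 k * ev 1 l + (1 / real s) * (\<Sum>i=1..s. ev (i+1) k * ev (i+1) l)"
proof -
  have sq: "sqrt (real s) * sqrt (real s) = real s" using assms by simp
  have "bvec s i k * bvec s i l = (4 / real s) * (ev (i+1) k * ev (i+1) l)" for i
  proof -
    have "bvec s i k * bvec s i l = (4 / (sqrt (real s) * sqrt (real s))) * (ev (i+1) k * ev (i+1) l)"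
      using assms by (simp add: bvec_lo field_simps)
    then show ?thesis unfolding sq .
  qed
  then have "(\<Sum>i=1..s. bvec s i k * bvec s i l) = (4 / real s) * (\<Sum>i=1..s. ev (i+1) k * ev (i+1) l)"
    by (simp add: sum_distrib_left)
  then show ?thesis unfolding Zopt_gram using assms
    by (simp add: avec_lo field_simps)
qed

lemma Zopt_k1: "s \<ge> 1 \<Longrightarrow> k \<le> s + 1 \<Longrightarrow> Zopt s k 1 = ev 1 k"
  by (simp add: Zopt_lo ev_def)

lemma Zopt_mm: assumes "s \<ge> 1" "m \<in> {1..s}" shows "Zopt s (m+1) (m+1) = 1 / real s"
proof -
  have "(\<Sum>i=1..s. ev (i+1) (m+1) * ev (i+1) (m+1)) = (\<Sum>i=1..s. ev m i * 1)"
    by (intro sum.cong) (auto simp: ev_def)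
  also have "\<dots> = 1" using assms by (intro sum_ev_left) auto
  finally show ?thesis using assms by (simp add: Zopt_lo ev_def)
qed

lemma Zopt_21:
  assumes "s \<ge> 1" "r \<in> {1..2 * s}" "j \<le> s + 1"
  shows "Zopt s (s + 1 + r) j = ev 1 j / 2 + sg r / (2 * sqrt (real s)) * ev ((r + 1) div 2 + 1) j"
proof -
  have pr: "(r + 1) div 2 \<in> {1..s}" using assms by auto
  have "(\<Sum>i=1..s. bvec s i (s + 1 + r) * bvec s i j)
      = (\<Sum>i=1..s. if i = (r + 1) div 2 then sg r * (2 / sqrt (real s) * ev (i + 1) j) else 0)"
  proof (intro sum.cong refl)
    fix i assume "i \<in> {1..s}"
    show "bvec s i (s + 1 + r) * bvec s i j = (if i = (r + 1) div 2 then sg r * (2 / sqrt (real s) * ev (i + 1) j) else 0)"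
      using assms bvec_hi_sg[of r s i] bvec_lo[of j s i] by simp
  qed
  also have "\<dots> = sg r * (2 / sqrt (real s) * ev ((r + 1) div 2 + 1) j)"
    using pr by simp
  finally show ?thesis unfolding Zopt_gram using assms
    by (simp add: avec_hi avec_lo field_simps)
qed

lemma Zopt_22:
  assumes "s \<ge> 1" "r \<in> {1..2 * s}" "r' \<in> {1..2 * s}"
  shows "Zopt s (s + 1 + r) (s + 1 + r') = (1/4) * (1 + (if (r + 1) div 2 = (r' + 1) div 2 then sg r * sg r' else 0))"
proof -
  have pr: "(r + 1) div 2 \<in> {1..s}" using assms by auto
  have "(\<Sum>i=1..s. bvec s i (s + 1 + r) * bvec s i (s + 1 + r'))
      = (\<Sum>i=1..s. if i = (r + 1) div 2 then sg r * (if i = (r' + 1) div 2 then sg r' else 0) else 0)"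
  proof (intro sum.cong refl)
    fix i assume "i \<in> {1..s}"
    show "bvec s i (s + 1 + r) * bvec s i (s + 1 + r') = (if i = (r + 1) div 2 then sg r * (if i = (r' + 1) div 2 then sg r' else 0) else 0)"
      using assms bvec_hi_sg[of r s i] bvec_hi_sg[of r' s i] by simp
  qed
  also have "\<dots> = (if (r + 1) div 2 = (r' + 1) div 2 then sg r * sg r' else 0)"
    using pr by simp
  finally show ?thesis unfolding Zopt_gram using assms
    by (simp add: avec_hi)
qed


lemma frob_g1: assumes "n \<ge> 1" shows "frob n n (outer (g1 s)) Z = Z 1 1"
proof -
  have n1: "1 \<in> {1..n}" using assms by simp
  have "frob n n (outer (g1 s)) Z = (\<Sum>i=1..n. ev 1 i * (\<Sum>j=1..n. ev 1 j * Z i j))"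
    unfolding frob_def outer_def g1_ev by (simp add: mult.assoc sum_distrib_left)
  also have "\<dots> = Z 1 1" using n1 by (simp add: sum_ev_left)
  finally show ?thesis .
qed

lemma frob_diag: "frob n n M Z = (\<Sum>i=1..n. \<Sum>j=1..n. M i j * Z i j)"
  by (simp add: frob_def)

lemma frob_J: "frob (s+1) (s+1) Jmat (Z11 s Z) = Z 1 1 - (\<Sum>m=1..s. Z (m+1) (m+1))"
proof -
  have "frob (s+1) (s+1) Jmat (Z11 s Z) = (\<Sum>i=1..s+1. (if i = 1 then 1 else -1) * Z i i)"
    unfolding frob_def Z11_def
  proof (intro sum.cong refl)
    fix i assume "i \<in> {1..s+1}"
    have "(\<Sum>j=1..s+1. Jmat i j * Z i j) = (\<Sum>j=1..s+1. ((if i = 1 then 1 else -1) * Z i j) * ev i j)"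
      by (intro sum.cong) (auto simp: Jmat_def ev_def)
    also have "\<dots> = (if i = 1 then 1 else -1) * Z i i"
      using \<open>i \<in> {1..s+1}\<close> by (intro sum_ev_right) auto
    finally show "(\<Sum>j=1..s+1. Jmat i j * Z i j) = (if i = 1 then 1 else -1) * Z i i" .
  qed
  also have "\<dots> = (\<Sum>i=1..1+s. (if i = 1 then 1 else -1) * Z i i)" by (simp add: add.commute)
  also have "\<dots> = Z 1 1 - (\<Sum>m=1..s. Z (m+1) (m+1))"
    unfolding sum_split_range by (simp add: sum_negf)
  finally show ?thesis .
qed

lemma frob_I: "frob n n Imat Z = (\<Sum>i=1..n. Z i i)"
proof -
  have "frob n n Imat Z = (\<Sum>i=1..n. \<Sum>j=1..n. Z i j * ev i j)"
    unfolding frob_def by (intro sum.cong refl) (auto simp: Imat_def ev_def)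
  also have "\<dots> = (\<Sum>i=1..n. Z i i)"
    by (intro sum.cong refl sum_ev_right) auto
  finally show ?thesis .
qed

lemma obj_pairs:
  "objective s Z = (\<Sum>i=1..s. (Z (s + 2 * i) 1 + Z (s + 2 * i) (i+1)) / 2
      + (Z (s + 2 * i + 1) 1 - Z (s + 2 * i + 1) (i+1)) / 2)"
proof -
  have "objective s Z = (\<Sum>r=1..2 * s. \<Sum>c=1..s+1. Fmat s r c * Z (s + 1 + r) c)"
    unfolding objective_def frob_def Z21_def by simp
  also have "\<dots> = (\<Sum>i=1..s. (\<Sum>c=1..s+1. Fmat s (2 * i - 1) c * Z (s + 1 + (2 * i - 1)) c)
      + (\<Sum>c=1..s+1. Fmat s (2 * i) c * Z (s + 1 + 2 * i) c))"
    by (rule sum_pairs)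
  also have "\<dots> = (\<Sum>i=1..s. (Z (s + 2 * i) 1 + Z (s + 2 * i) (i+1)) / 2
      + (Z (s + 2 * i + 1) 1 - Z (s + 2 * i + 1) (i+1)) / 2)"
  proof (intro sum.cong refl)
    fix i assume i: "i \<in> {1..s}"
    have e1: "s + 1 + (2 * i - 1) = s + 2 * i" "s + 1 + 2 * i = s + 2 * i + 1" using i by auto
    have F1: "Fmat s (2 * i - 1) c = (ev 1 c + ev (i+1) c) / 2" for c
    proof -
      have "odd (2 * i - 1)" "(2 * i - 1 + 1) div 2 = i" using i by auto
      then show ?thesis unfolding Fmat_def Let_def by simp
    qed
    have F2: "Fmat s (2 * i) c = (ev 1 c - ev (i+1) c) / 2" for c
      unfolding Fmat_def Let_def by simp
    have r1: "(\<Sum>c=1..s+1. Fmat s (2 * i - 1) c * Z (s + 2 * i) c) = (Z (s + 2 * i) 1 + Z (s + 2 * i) (i+1)) / 2"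
      unfolding F1 using i
      by (simp add: add_divide_distrib distrib_right sum.distrib sum_divide_distrib[symmetric] sum_ev_left del: sum.cl_ivl_Suc)
    have r2: "(\<Sum>c=1..s+1. Fmat s (2 * i) c * Z (s + 2 * i + 1) c) = (Z (s + 2 * i + 1) 1 - Z (s + 2 * i + 1) (i+1)) / 2"
      unfolding F2 using i
      by (simp add: diff_divide_distrib left_diff_distrib sum_subtractf sum_divide_distrib[symmetric] sum_ev_left del: sum.cl_ivl_Suc)
    show "(\<Sum>c=1..s+1. Fmat s (2 * i - 1) c * Z (s + 1 + (2 * i - 1)) c)
      + (\<Sum>c=1..s+1. Fmat s (2 * i) c * Z (s + 1 + 2 * i) c) = (Z (s + 2 * i) 1 + Z (s + 2 * i) (i+1)) / 2
      + (Z (s + 2 * i + 1) 1 - Z (s + 2 * i + 1) (i+1)) / 2"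
      unfolding e1 r1 r2 ..
  qed
  finally show ?thesis .
qed

lemma sg_sq: "sg r * sg r = 1" by (simp add: sg_def)

lemma Zopt_objective: assumes "s \<ge> 1" shows "objective s (Zopt s) = (sqrt (real s) + real s) / 2"
proof -
  have "objective s (Zopt s) = (\<Sum>i=1..s. 1/2 + 1 / (2 * sqrt (real s)))"
    unfolding obj_pairs
  proof (intro sum.cong refl)
    fix i assume i: "i \<in> {1..s}"
    have a: "2 * i - 1 \<in> {1..2 * s}" "2 * i \<in> {1..2 * s}" using i by auto
    have b: "s + 1 + (2 * i - 1) = s + 2 * i" "s + 1 + 2 * i = s + 2 * i + 1"
       "(2 * i - 1 + 1) div 2 = i" "(2 * i + 1) div 2 = i" "odd (2 * i - 1)" using i by auto
    have "Zopt s (s + 2 * i) 1 = 1/2" using Zopt_21[OF assms a(1), of 1] b by (simp add: ev_def)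
    moreover have "Zopt s (s + 2 * i) (i + 1) = 1 / (2 * sqrt (real s))"
      using Zopt_21[OF assms a(1), of "i+1"] b i by (simp add: ev_def sg_def)
    moreover have "Zopt s (s + 2 * i + 1) 1 = 1/2" using Zopt_21[OF assms a(2), of 1] b by (simp add: ev_def)
    moreover have "Zopt s (s + 2 * i + 1) (i + 1) = - 1 / (2 * sqrt (real s))"
      using Zopt_21[OF assms a(2), of "i+1"] b i by (simp add: ev_def sg_def)
    ultimately show "(Zopt s (s + 2 * i) 1 + Zopt s (s + 2 * i) (i+1)) / 2
      + (Zopt s (s + 2 * i + 1) 1 - Zopt s (s + 2 * i + 1) (i+1)) / 2 = 1/2 + 1 / (2 * sqrt (real s))"
      by (simp add: field_simps)
  qed
  also have "\<dots> = real s / 2 + real s / (2 * sqrt (real s))" using assms by (simp add: field_simps)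
  also have "real s / (2 * sqrt (real s)) = sqrt (real s) / 2"
    using assms by (simp add: field_simps real_div_sqrt)
  finally show ?thesis by simp
qed


lemma Zopt_feasible:
  assumes s1: "s \<ge> 1" and r: "r \<ge> real s + 2"
  shows "feasible s r (Zopt s)"
proof -
  define n where "n = 3 * s + 1"
  have sym: "symmetric_mat n (Zopt s)"
    unfolding symmetric_mat_def Zopt_gram by (simp add: mult.commute)
  have gq: "(\<Sum>k=1..n. \<Sum>l=1..n. x k * Zopt s k l * x l) =
      (1/4) * ((\<Sum>k=1..n. x k * avec s k)^2 + (\<Sum>i=1..s. (\<Sum>k=1..n. x k * bvec s i k)^2))" for x
    unfolding Zopt_gram by (rule gram_quad)
  have psdZ: "psd n (Zopt s)"
    unfolding psd_def
  proof (intro conjI sym allI)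
    fix x :: "nat \<Rightarrow> real"
    have "0 \<le> (1/4) * ((\<Sum>k=1..n. x k * avec s k)^2 + (\<Sum>i=1..s. (\<Sum>k=1..n. x k * bvec s i k)^2))"
      by (intro mult_nonneg_nonneg add_nonneg_nonneg sum_nonneg) auto
    then show "0 \<le> (\<Sum>i=1..n. \<Sum>j=1..n. x i * Zopt s i j * x j)" unfolding gq .
  qed
  have E: "EZEt_diag s (Zopt s) c = 0" if c: "c \<in> {1..s}" for c
  proof -
    have "EZEt_diag s (Zopt s) c = (\<Sum>k=1..n. \<Sum>l=1..n. Emat s c k * Zopt s k l * Emat s c l)"
      unfolding EZEt_diag_def n_def by simp
    also have "\<dots> = 0" unfolding gq using E_avec[OF c] E_bvec[OF c] unfolding n_def by simp
    finally show ?thesis .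
  qed
  have Z11: "Zopt s 1 1 = 1" using Zopt_k1[OF s1, of 1] by (simp add: ev_def)
  have diagsum: "(\<Sum>m=1..s. Zopt s (m+1) (m+1)) = 1"
  proof -
    have "(\<Sum>m=1..s. Zopt s (m+1) (m+1)) = (\<Sum>m=1..s. 1 / real s)"
      using Zopt_mm[OF s1] by simp
    then show ?thesis using s1 by simp
  qed
  have trace: "frob n n Imat (Zopt s) = real s + 2"
  proof -
    have "frob n n Imat (Zopt s) = (\<Sum>i=1..(1 + s) + 2 * s. Zopt s i i)"
      unfolding frob_I n_def by (simp add: algebra_simps)
    also have "\<dots> = Zopt s 1 1 + (\<Sum>m=1..s. Zopt s (1 + m) (1 + m)) + (\<Sum>r=1..2 * s. Zopt s (1 + s + r) (1 + s + r))"
      unfolding sum_split_range by simp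
    also have "(\<Sum>r=1..2 * s. Zopt s (1 + s + r) (1 + s + r)) = (\<Sum>r=1..2 * s. 1/2)"
    proof (intro sum.cong refl)
      fix r assume "r \<in> {1..2 * s}"
      then show "Zopt s (1 + s + r) (1 + s + r) = 1/2"
        using Zopt_22[OF s1, of r r] sg_sq[of r] by (simp add: add.commute)
    qed
    finally show ?thesis using Z11 diagsum by (simp add: add.commute)
  qed
  have J: "frob (s+1) (s+1) Jmat (Z11 s (Zopt s)) = 0"
    unfolding frob_J Z11 diagsum by simp
  have col1: "(\<lambda>i. Z11 s (Zopt s) i 1) \<in> Uhat2 s"
  proof -
    have "(\<Sum>i\<in>{2..s+1}. (Z11 s (Zopt s) i 1)\<^sup>2) = 0"
      unfolding Z11_def using Zopt_k1[OF s1] by (intro sum.neutral) (auto simp: ev_def)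
    then show ?thesis unfolding Uhat2_def Z11_def using Z11 by simp
  qed
  have Z22nn: "Z22 s (Zopt s) i j \<ge> 0" if "i \<in> {1..2 * s}" "j \<in> {1..2 * s}" for i j
  proof -
    have "sg i * sg j \<ge> -1" by (simp add: sg_def)
    then show ?thesis unfolding Z22_def using Zopt_22[OF s1 that] by (simp split: if_split_asm)
  qed
  have rows: "(\<lambda>j. Z21 s (Zopt s) i j) \<in> Uhat2 s" if i: "i \<in> {1..2 * s}" for i
  proof -
    define p where "p = (i + 1) div 2 + 1"
    have p: "p \<in> {2..s+1}" using i unfolding p_def by auto
    have "(\<Sum>j\<in>{2..s+1}. (Zopt s (s + 1 + i) j)\<^sup>2) = (\<Sum>j\<in>{2..s+1}. 1 / (4 * real s) * ev p j)"
    proof (intro sum.cong refl)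
      fix j assume j: "j \<in> {2..s+1}"
      have "Zopt s (s + 1 + i) j = sg i / (2 * sqrt (real s)) * ev p j"
        using Zopt_21[OF s1 i, of j] j unfolding p_def by (simp add: ev_def)
      also have "(\<dots>)\<^sup>2 = (sg i * sg i) / (4 * (sqrt (real s))^2) * (ev p j * ev p j)"
        by (simp add: power2_eq_square field_simps)
      also have "\<dots> = 1 / (4 * real s) * ev p j"
        using s1 unfolding sg_sq by (simp add: ev_def)
      finally show "(Zopt s (s + 1 + i) j)\<^sup>2 = 1 / (4 * real s) * ev p j" .
    qed
    also have "\<dots> = 1 / (4 * real s)" using p by (intro sum_ev_right) auto
    finally have S: "(\<Sum>j\<in>{2..s+1}. (Zopt s (s + 1 + i) j)\<^sup>2) = 1 / (4 * real s)" .
    have "(i + 1) div 2 \<noteq> 0" using i by auto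
    then have h: "Zopt s (s + 1 + i) 1 = 1/2" using Zopt_21[OF s1 i, of 1] by (simp add: ev_def)
    have "sqrt (1 / (4 * real s)) \<le> sqrt (1/4)"
      using s1 by (intro real_sqrt_le_mono) (simp add: field_simps)
    also have "sqrt (1/4) = (1/2 :: real)" by (simp add: real_sqrt_divide)
    finally show ?thesis unfolding Uhat2_def Z21_def using S h by simp
  qed
  have g: "frob n n (outer (g1 s)) (Zopt s) = 1" using frob_g1[of n s "Zopt s"] Z11 unfolding n_def by simp
  show ?thesis unfolding feasible_def
    using sym E trace r J col1 Z22nn rows psdZ g unfolding n_def by auto
qed


theorem proposition7:
  fixes s :: nat and r :: real
  assumes "s \<ge> 2" and "r > 0" and "r \<ge> real s + 2"
    and "\<forall>u w. u 1 = 1 \<and> sqrt (\<Sum>i\<in>{2..s+1}. (u i)\<^sup>2) \<le> 1 \<and> extreme_pt (Wpoly s) w \<longrightarrow>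
               (\<Sum>i\<in>{1..s+1}. (u i)\<^sup>2) + (\<Sum>j\<in>{1..2 * s}. (w j)\<^sup>2) \<le> r"
  shows "optimal s r (Zopt s) \<and> objective s (Zopt s) = (sqrt (real s) + real s) / 2"
proof -
  have s1: "s \<ge> 1" using assms(1) by simp
  show ?thesis
    unfolding optimal_def
    using Zopt_feasible[OF s1 assms(3)] Zopt_objective[OF s1] upper_bound[OF s1] by metis
qed

end
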